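(* Let $K\ge1$, $A=\{1,\dots,K\}$, let $d\ge1$ be an integer and $\eta>0$ with $\eta\le \frac{1}{Ke(d+1)}$. Consider the exponentially weighted update: $w_1(i)=1$, $W_t=\sum_{j\in A}w_t(j)$, $p_t(i)=w_t(i)/W_t$, $w_{t+1}(i)=p_t(i)\exp(-\eta\widehat{\ell}_t(i))$, where the loss estimates have the form $$\widehat{\ell}_t(i)=\begin{cases}\dfrac{\ell_{t-d}(i)}{q_{t-d}(i)}\,B_{t-d}(i) & \text{if } t>d,\\[2mm] 0&\text{otherwise,}\end{cases}$$ with $\ell_s(i)\in[0,1]$, $B_s(i)\in\{0,1\}$, and $q_s(i)$ numbers satisfying $q_s(i)\ge p_s(i)>0$ for all $s\ge1$, $i\in A$. Then for all $t\ge1$ and all $i\in A$, $$p_{t+1}(i)\le\Bigl(1+\frac1d\Bigr)p_t(i).$$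
   Context: The statement holds deterministically, for every realization of the $\ell_s,B_s,q_s$ satisfying the stated conditions. *)

theory Defs
  imports Complex_Main
begin

definition lhat :: "nat \<Rightarrow> (nat \<Rightarrow> nat \<Rightarrow> real) \<Rightarrow> (nat \<Rightarrow> nat \<Rightarrow> real)
    \<Rightarrow> (nat \<Rightarrow> nat \<Rightarrow> real) \<Rightarrow> nat \<Rightarrow> nat \<Rightarrow> real" where
  "lhat d l B q t i = (if t > d then l (t - d) i / q (t - d) i * B (t - d) i else 0)"

text \<open>Weights w_t(i), with w_1(i) = 1 and
  w_{t+1}(i) = p_t(i) * exp(-eta * lhat_t(i)), p_t(i) = w_t(i) / sum_{j in A} w_t(j).
  The value at t = 0 is an unused dummy.\<close>
primrec ew_w :: "nat \<Rightarrow> nat \<Rightarrow> real \<Rightarrow> (nat \<Rightarrow> nat \<Rightarrow> real) \<Rightarrow> (nat \<Rightarrow> nat \<Rightarrow> real)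
    \<Rightarrow> (nat \<Rightarrow> nat \<Rightarrow> real) \<Rightarrow> nat \<Rightarrow> nat \<Rightarrow> real" where
  "ew_w K d \<eta> l B q 0 = (\<lambda>i. 1)"
| "ew_w K d \<eta> l B q (Suc t) =
     (if t = 0 then (\<lambda>i. 1)
      else (\<lambda>i. ew_w K d \<eta> l B q t i / (\<Sum>j\<in>{1..K}. ew_w K d \<eta> l B q t j)
                 * exp (- \<eta> * lhat d l B q t i)))"

definition ew_p :: "nat \<Rightarrow> nat \<Rightarrow> real \<Rightarrow> (nat \<Rightarrow> nat \<Rightarrow> real) \<Rightarrow> (nat \<Rightarrow> nat \<Rightarrow> real)
    \<Rightarrow> (nat \<Rightarrow> nat \<Rightarrow> real) \<Rightarrow> nat \<Rightarrow> nat \<Rightarrow> real" where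
  "ew_p K d \<eta> l B q t i = ew_w K d \<eta> l B q t i / (\<Sum>j\<in>{1..K}. ew_w K d \<eta> l B q t j)"

end

theory Submission
  imports Defs
begin

lemma step_formula:
  assumes "t \<ge> 1"
  shows "ew_p K d \<eta> l B q (Suc t) i = ew_p K d \<eta> l B q t i * exp (- \<eta> * lhat d l B q t i) /
     (\<Sum>j\<in>{1..K}. ew_p K d \<eta> l B q t j * exp (- \<eta> * lhat d l B q t j))"
  using assms by (simp add: ew_p_def)

lemma pow_le_e:
  assumes "d \<ge> (1::nat)"
  shows "(1 + 1 / real d) ^ d \<le> exp 1"
proof -
  have "1 + 1 / real d \<le> exp (1 / real d)" using exp_ge_add_one_self by (metis add.commute)
  hence "(1 + 1 / real d) ^ d \<le> exp (1 / real d) ^ d"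
    by (intro power_mono) (auto simp: add_nonneg_nonneg)
  also have "\<dots> = exp 1" using assms by (simp add: exp_of_nat_mult[symmetric])
  finally show ?thesis .
qed

theorem lemma2:
  fixes K d :: nat and \<eta> :: real and l B q :: "nat \<Rightarrow> nat \<Rightarrow> real"
  assumes "K \<ge> 1" and "d \<ge> 1" and "\<eta> > 0"
    and "\<eta> \<le> 1 / (real K * exp 1 * (real d + 1))"
    and "\<And>s i. s \<ge> 1 \<Longrightarrow> i \<in> {1..K} \<Longrightarrow> 0 \<le> l s i \<and> l s i \<le> 1"
    and "\<And>s i. s \<ge> 1 \<Longrightarrow> i \<in> {1..K} \<Longrightarrow> B s i \<in> {0, 1}"
    and "\<And>s i. s \<ge> 1 \<Longrightarrow> i \<in> {1..K} \<Longrightarrow>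
           q s i \<ge> ew_p K d \<eta> l B q s i \<and> ew_p K d \<eta> l B q s i > 0"
  shows "\<forall>t\<ge>1. \<forall>i\<in>{1..K}.
           ew_p K d \<eta> l B q (t + 1) i \<le> (1 + 1 / real d) * ew_p K d \<eta> l B q t i"
proof -
  define p where "p = ew_p K d \<eta> l B q"
  define c where "c = 1 + 1 / real d"
  define L where "L = lhat d l B q"
  have c0: "c \<ge> 0" unfolding c_def by simp
  have pos: "\<And>s j. s \<ge> 1 \<Longrightarrow> j \<in> {1..K} \<Longrightarrow> p s j > 0" using assms(7) unfolding p_def by blast
  have lpos: "\<And>t j. j \<in> {1..K} \<Longrightarrow> L t j \<ge> 0"
  proof -
    fix t j assume j: "j \<in> {1..K}"
    show "L t j \<ge> 0"
    proof (cases "t > d")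
      case True
      hence s: "t - d \<ge> 1" by simp
      have "l (t-d) j \<ge> 0" using assms(5)[OF s j] by simp
      moreover have "q (t-d) j > 0" using assms(7)[OF s j] by linarith
      moreover have "B (t-d) j \<ge> 0" using assms(6)[OF s j] by auto
      ultimately show ?thesis using True unfolding L_def lhat_def by simp
    qed (simp add: L_def lhat_def)
  qed
  have sum1: "\<And>t. t \<ge> 1 \<Longrightarrow> (\<Sum>j\<in>{1..K}. p t j) = 1"
  proof -
    fix t :: nat assume t: "t \<ge> 1"
    define W where "W = (\<Sum>j\<in>{1..K}. ew_w K d \<eta> l B q t j)"
    have "p t 1 > 0" using pos[OF t] assms(1) by simp
    hence W0: "W \<noteq> 0" unfolding p_def ew_p_def W_def by auto
    have "(\<Sum>j\<in>{1..K}. p t j) = (\<Sum>j\<in>{1..K}. ew_w K d \<eta> l B q t j) / W"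
      unfolding p_def ew_p_def W_def by (simp only: sum_divide_distrib)
    thus "(\<Sum>j\<in>{1..K}. p t j) = 1" using W0 unfolding W_def by simp
  qed
  have main: "\<And>t. t \<ge> 1 \<Longrightarrow> \<forall>i\<in>{1..K}. p (Suc t) i \<le> c * p t i"
  proof -
    fix t :: nat
    show "t \<ge> 1 \<Longrightarrow> \<forall>i\<in>{1..K}. p (Suc t) i \<le> c * p t i"
    proof (induction t rule: less_induct)
      case (less t)
      define e where "e j = exp (- \<eta> * L t j)" for j
      have ele: "\<And>j. j \<in> {1..K} \<Longrightarrow> e j \<le> 1" unfolding e_def using lpos assms(3)
        by (simp add: mult_nonneg_nonneg)
      have epos: "\<And>j. e j > 0" unfolding e_def by simp
      have ege: "e j \<ge> 1 - \<eta> * L t j" for j unfolding e_def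
        using exp_ge_add_one_self[of "- \<eta> * L t j"] by simp
      have bound: "(\<Sum>j\<in>{1..K}. p t j * L t j) \<le> real K * exp 1"
      proof (cases "t > d")
        case False
        hence "\<And>j. L t j = 0" unfolding L_def lhat_def by simp
        thus ?thesis by simp
      next
        case True
        define s where "s = t - d"
        have s1: "s \<ge> 1" using True s_def by simp
        have growth: "\<And>m. m \<le> d \<Longrightarrow> \<forall>j\<in>{1..K}. p (s+m) j \<le> c^m * p s j"
        proof -
          fix m show "m \<le> d \<Longrightarrow> \<forall>j\<in>{1..K}. p (s+m) j \<le> c^m * p s j"
          proof (induction m)
            case 0 then show ?case by simp
          next
            case (Suc m)
            have lt: "s + m < t" using Suc.prems True s_def by simp
            have IH: "\<forall>j\<in>{1..K}. p (Suc (s+m)) j \<le> c * p (s+m) j"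
              using less.IH[OF lt] s1 by simp
            show ?case
            proof
              fix j assume j: "j \<in> {1..K}"
              have "p (s + Suc m) j \<le> c * p (s+m) j" using IH j by simp
              also have "\<dots> \<le> c * (c^m * p s j)"
                using Suc.IH Suc.prems j c0 by (intro mult_left_mono) auto
              finally show "p (s + Suc m) j \<le> c ^ Suc m * p s j" by simp
            qed
          qed
        qed
        have "\<And>j. j \<in> {1..K} \<Longrightarrow> p t j * L t j \<le> exp 1"
        proof -
          fix j assume j: "j \<in> {1..K}"
          have ps: "p s j > 0" using pos[OF s1 j] .
          have pt: "p t j > 0" using pos[OF _ j] less.prems by simp
          have "p t j \<le> c^d * p s j" using growth[of d] j True s_def by simp
          also have "\<dots> \<le> exp 1 * p s j"
            using pow_le_e[OF assms(2)] ps unfolding c_def by (intro mult_right_mono) auto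
          finally have g: "p t j \<le> exp 1 * p s j" .
          have qs: "q s j \<ge> p s j" using assms(7)[OF s1 j] unfolding p_def by blast
          have l01: "0 \<le> l s j" "l s j \<le> 1" using assms(5)[OF s1 j] by auto
          have b01: "B s j \<in> {0,1}" using assms(6)[OF s1 j] .
          have "L t j = l s j / q s j * B s j" unfolding L_def lhat_def s_def using True by simp
          also have "\<dots> \<le> 1 / q s j"
          proof -
            have "l s j / q s j \<le> 1 / q s j" using l01 qs ps
              by (intro divide_right_mono) auto
            moreover have "l s j / q s j \<ge> 0" using l01 qs ps by simp
            ultimately show ?thesis using b01 qs ps by auto
          qed
          also have "\<dots> \<le> 1 / p s j" using qs ps by (intro divide_left_mono) auto
          finally have "p t j * L t j \<le> p t j * (1 / p s j)" using pt by (intro mult_left_mono) auto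
          also have "\<dots> = p t j / p s j" by simp
          also have "\<dots> \<le> exp 1" using g ps by (simp add: divide_le_eq mult.commute)
          finally show "p t j * L t j \<le> exp 1" .
        qed
        hence "(\<Sum>j\<in>{1..K}. p t j * L t j) \<le> (\<Sum>j\<in>{1..K}. exp 1)" by (intro sum_mono) auto
        thus ?thesis by simp
      qed
      have etaK: "\<eta> * (real K * exp 1) \<le> 1 / (real d + 1)"
      proof -
        have Ke: "real K * exp 1 > 0" using assms(1) by simp
        have "\<eta> * (real K * exp 1) \<le> 1 / (real K * exp 1 * (real d + 1)) * (real K * exp 1)"
          using assms(4) Ke by (intro mult_right_mono) auto
        also have "\<dots> = 1 / (real d + 1)" using Ke
        proof -
          have "real d + 1 > 0" by simp
          thus ?thesis using Ke assms(1) by (simp add: divide_simps)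
        qed
        finally show ?thesis .
      qed
      define S where "S = (\<Sum>j\<in>{1..K}. p t j * e j)"
      have "S \<ge> (\<Sum>j\<in>{1..K}. p t j * (1 - \<eta> * L t j))" unfolding S_def
        using ege pos less.prems by (intro sum_mono mult_left_mono) (auto simp: less_imp_le)
      also have "(\<Sum>j\<in>{1..K}. p t j * (1 - \<eta> * L t j)) = (\<Sum>j\<in>{1..K}. p t j) - \<eta> * (\<Sum>j\<in>{1..K}. p t j * L t j)"
        by (simp add: algebra_simps sum_subtractf sum_distrib_left)
      also have "\<dots> = 1 - \<eta> * (\<Sum>j\<in>{1..K}. p t j * L t j)" using sum1 less.prems by simp
      finally have "S \<ge> 1 - \<eta> * (\<Sum>j\<in>{1..K}. p t j * L t j)" .
      moreover have "\<eta> * (\<Sum>j\<in>{1..K}. p t j * L t j) \<le> \<eta> * (real K * exp 1)"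
        using bound assms(3) by (intro mult_left_mono) auto
      ultimately have Sge: "S \<ge> real d / (real d + 1)" using etaK
        by (smt (verit, del_insts) add_divide_distrib of_nat_0_le_iff divide_self_if)
      have dpos: "real d > 0" using assms(2) by simp
      have Spos: "S > 0" using Sge dpos by (smt (verit) divide_pos_pos)
      show ?case
      proof
        fix i assume i: "i \<in> {1..K}"
        have pti: "p t i > 0" using pos[OF _ i] less.prems by simp
        have "p (Suc t) i = p t i * e i / S"
          unfolding p_def S_def e_def L_def using step_formula[OF less.prems] by simp
        also have "\<dots> \<le> p t i / S" using ele[OF i] pti Spos
          by (intro divide_right_mono) (auto simp: mult_left_le)
        also have "\<dots> \<le> p t i / (real d / (real d + 1))"
          using Sge pti dpos Spos by (intro divide_left_mono) (auto intro: mult_pos_pos)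
        also have "\<dots> = c * p t i" unfolding c_def using dpos by (simp add: field_simps)
        finally show "p (Suc t) i \<le> c * p t i" .
      qed
    qed
  qed
  show ?thesis using main unfolding p_def c_def by simp
qed

end
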